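(* Let $\Bbbk$ be an algebraically closed field of characteristic zero, $G$ a finite abelian group, $u\in G$ of order $2$, and $V$ a finite-dimensional $\Bbbk G$-module with $u\cdot v=-v$ for all $v\in V$. Let $(T,\beta,\alpha,\psi)$ and $(T',\beta',\alpha',\psi')$ be compatible data. Then: (1) $(T\circ T',\beta\circ T'+\beta',\alpha\circ\alpha',\psi\psi')$ is a compatible datum; (2) the set of compatible data with the product $$(T,\beta,\alpha,\psi)\bullet(T',\beta',\alpha',\psi')=(T\circ T',\beta\circ T'+\beta',\alpha\circ\alpha',\psi\psi')$$ is a group with identity $(\mathrm{Id}_V,0,\mathrm{id}_G,1)$.
   Context: A compatible datum $(T,\beta,\alpha,\psi)$ consists of: a group automorphism $\alpha:G\to G$ with $\alpha(u)=u$; a linear automorphism $T:V\to V$ with $T(g\cdot v)=\alpha(g)\cdot T(v)$ for all $v\in V$, $g\in G$; a symmetric $G$-invariant bilinear form $\beta:V\times V\to\Bbbk$; and $\psi\in H^2(G,\Bbbk^\times)$. Here $(\beta\circ T')(v,w)=\beta(T'(v),T'(w))$ and $\psi\psi'$ is the product in $H^2(G,\Bbbk^\times)$. *)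

theory Defs
  imports "HOL-Algebra.Multiplicative_Group" "HOL-Computational_Algebra.Polynomial"
begin

text \<open>Normalisation-free 2-cocycles of G with values in the multiplicative group
  of the field; only their values on the carrier matter.\<close>
definition cocycles2 :: "('g, 'm) monoid_scheme \<Rightarrow> ('g \<Rightarrow> 'g \<Rightarrow> 'k::field) set" where
  "cocycles2 G = {c. (\<forall>x\<in>carrier G. \<forall>y\<in>carrier G. c x y \<noteq> 0) \<and>
     (\<forall>x\<in>carrier G. \<forall>y\<in>carrier G. \<forall>z\<in>carrier G.
        c x y * c (x \<otimes>\<^bsub>G\<^esub> y) z = c y z * c x (y \<otimes>\<^bsub>G\<^esub> z))}"

definition cohomologous :: "('g, 'm) monoid_scheme \<Rightarrow> (('g \<Rightarrow> 'g \<Rightarrow> 'k::field) \<times> ('g \<Rightarrow> 'g \<Rightarrow> 'k)) set" where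
  "cohomologous G = {(c, c'). c \<in> cocycles2 G \<and> c' \<in> cocycles2 G \<and>
     (\<exists>f. (\<forall>x\<in>carrier G. f x \<noteq> 0) \<and>
        (\<forall>x\<in>carrier G. \<forall>y\<in>carrier G. c' x y = c x y * f x * f y / f (x \<otimes>\<^bsub>G\<^esub> y)))}"

definition H2 :: "('g, 'm) monoid_scheme \<Rightarrow> ('g \<Rightarrow> 'g \<Rightarrow> 'k::field) set set" where
  "H2 G = cocycles2 G // cohomologous G"

definition H2_mult :: "('g, 'm) monoid_scheme \<Rightarrow> ('g \<Rightarrow> 'g \<Rightarrow> 'k::field) set
    \<Rightarrow> ('g \<Rightarrow> 'g \<Rightarrow> 'k) set \<Rightarrow> ('g \<Rightarrow> 'g \<Rightarrow> 'k) set" where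
  "H2_mult G \<psi> \<psi>' = cohomologous G ``
     {(\<lambda>x y. (SOME c. c \<in> \<psi>) x y * (SOME c. c \<in> \<psi>') x y)}"

definition H2_one :: "('g, 'm) monoid_scheme \<Rightarrow> ('g \<Rightarrow> 'g \<Rightarrow> 'k::field) set" where
  "H2_one G = cohomologous G `` {(\<lambda>x y. 1)}"

type_synonym ('v, 'k, 'g) datum =
  "('v \<Rightarrow> 'v) \<times> ('v \<Rightarrow> 'v \<Rightarrow> 'k) \<times> ('g \<Rightarrow> 'g) \<times> ('g \<Rightarrow> 'g \<Rightarrow> 'k) set"

text \<open>Group automorphisms alpha are taken
  extensional on the carrier (functions G \<rightarrow> G).\<close>
definition compatible_datum ::
  "('g, 'm) monoid_scheme \<Rightarrow> 'g \<Rightarrow> ('k::field \<Rightarrow> 'v \<Rightarrow> 'v::ab_group_add)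
     \<Rightarrow> ('g \<Rightarrow> 'v \<Rightarrow> 'v) \<Rightarrow> ('v, 'k, 'g) datum \<Rightarrow> bool" where
  "compatible_datum G u scale act d = (case d of (T, \<beta>, \<alpha>, \<psi>) \<Rightarrow>
     \<alpha> \<in> iso G G \<and> \<alpha> \<in> extensional (carrier G) \<and> \<alpha> u = u \<and>
     Vector_Spaces.linear scale scale T \<and> bij T \<and>
     (\<forall>g\<in>carrier G. \<forall>v. T (act g v) = act (\<alpha> g) (T v)) \<and>
     (\<forall>v w. \<beta> v w = \<beta> w v) \<and>
     (\<forall>v. Vector_Spaces.linear scale (*) (\<beta> v)) \<and> (\<forall>w. Vector_Spaces.linear scale (*) (\<lambda>v. \<beta> v w)) \<and>
     (\<forall>g\<in>carrier G. \<forall>v w. \<beta> (act g v) (act g w) = \<beta> v w) \<and>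
     \<psi> \<in> H2 G)"

definition datum_mult ::
  "('g, 'm) monoid_scheme \<Rightarrow> ('v, 'k::field, 'g) datum \<Rightarrow> ('v, 'k, 'g) datum \<Rightarrow> ('v, 'k, 'g) datum" where
  "datum_mult G d d' = (case d of (T, \<beta>, \<alpha>, \<psi>) \<Rightarrow> case d' of (T', \<beta>', \<alpha>', \<psi>') \<Rightarrow>
     (T \<circ> T', (\<lambda>v w. \<beta> (T' v) (T' w) + \<beta>' v w), compose (carrier G) \<alpha> \<alpha>', H2_mult G \<psi> \<psi>'))"

definition datum_one :: "('g, 'm) monoid_scheme \<Rightarrow> ('v, 'k::field, 'g) datum" where
  "datum_one G = (id, (\<lambda>v w. 0), restrict id (carrier G), H2_one G)"

definition compatible_data_monoid ::
  "('g, 'm) monoid_scheme \<Rightarrow> 'g \<Rightarrow> ('k::field \<Rightarrow> 'v \<Rightarrow> 'v::ab_group_add)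
     \<Rightarrow> ('g \<Rightarrow> 'v \<Rightarrow> 'v) \<Rightarrow> ('v, 'k, 'g) datum monoid" where
  "compatible_data_monoid G u scale act =
     \<lparr>carrier = {d. compatible_datum G u scale act d},
      monoid.mult = datum_mult G, one = datum_one G\<rparr>"

end

theory Submission
  imports Defs
begin


lemma cocycles2_mult:
  assumes "a \<in> cocycles2 G" "b \<in> cocycles2 G"
  shows "(\<lambda>x y. a x y * b x y) \<in> cocycles2 G"
proof -
  { fix x y z assume xyz: "x \<in> carrier G" "y \<in> carrier G" "z \<in> carrier G"
    have ha: "a x y * a (x \<otimes>\<^bsub>G\<^esub> y) z = a y z * a x (y \<otimes>\<^bsub>G\<^esub> z)"
      using assms(1) xyz unfolding cocycles2_def by blast
    have hb: "b x y * b (x \<otimes>\<^bsub>G\<^esub> y) z = b y z * b x (y \<otimes>\<^bsub>G\<^esub> z)"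
      using assms(2) xyz unfolding cocycles2_def by blast
    have "a x y * b x y * (a (x \<otimes>\<^bsub>G\<^esub> y) z * b (x \<otimes>\<^bsub>G\<^esub> y) z)
        = (a x y * a (x \<otimes>\<^bsub>G\<^esub> y) z) * (b x y * b (x \<otimes>\<^bsub>G\<^esub> y) z)" by (simp add: ac_simps)
    also have "\<dots> = (a y z * a x (y \<otimes>\<^bsub>G\<^esub> z)) * (b y z * b x (y \<otimes>\<^bsub>G\<^esub> z))" using ha hb by simp
    also have "\<dots> = a y z * b y z * (a x (y \<otimes>\<^bsub>G\<^esub> z) * b x (y \<otimes>\<^bsub>G\<^esub> z))" by (simp add: ac_simps)
    finally have "a x y * b x y * (a (x \<otimes>\<^bsub>G\<^esub> y) z * b (x \<otimes>\<^bsub>G\<^esub> y) z)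
        = a y z * b y z * (a x (y \<otimes>\<^bsub>G\<^esub> z) * b x (y \<otimes>\<^bsub>G\<^esub> z))" . }
  then show ?thesis using assms unfolding cocycles2_def by auto
qed

lemma cocycles2_inv:
  assumes "a \<in> cocycles2 G"
  shows "(\<lambda>x y. inverse (a x y)) \<in> cocycles2 G"
proof -
  { fix x y z assume xyz: "x \<in> carrier G" "y \<in> carrier G" "z \<in> carrier G"
    have ha: "a x y * a (x \<otimes>\<^bsub>G\<^esub> y) z = a y z * a x (y \<otimes>\<^bsub>G\<^esub> z)"
      using assms(1) xyz unfolding cocycles2_def by blast
    hence "inverse (a x y) * inverse (a (x \<otimes>\<^bsub>G\<^esub> y) z) = inverse (a y z) * inverse (a x (y \<otimes>\<^bsub>G\<^esub> z))"
      by (metis inverse_mult_distrib) }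
  then show ?thesis using assms unfolding cocycles2_def by auto
qed

lemma cocycles2_one: "(\<lambda>x y. 1) \<in> cocycles2 G"
  unfolding cocycles2_def by auto

lemma cohI:
  assumes "a \<in> cocycles2 G" "b \<in> cocycles2 G" "\<forall>x\<in>carrier G. f x \<noteq> 0"
    "\<forall>x\<in>carrier G. \<forall>y\<in>carrier G. b x y = a x y * f x * f y / f (x \<otimes>\<^bsub>G\<^esub> y)"
  shows "(a, b) \<in> cohomologous G"
  using assms unfolding cohomologous_def by blast

lemma cohE:
  assumes "(a, b) \<in> cohomologous G"
  obtains f where "a \<in> cocycles2 G" "b \<in> cocycles2 G" "\<forall>x\<in>carrier G. f x \<noteq> 0"
    "\<forall>x\<in>carrier G. \<forall>y\<in>carrier G. b x y = a x y * f x * f y / f (x \<otimes>\<^bsub>G\<^esub> y)"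
  using assms unfolding cohomologous_def by blast

lemma ar_sym:
  fixes a b fx fy fz :: "'k::field"
  assumes "fx \<noteq> 0" "fy \<noteq> 0" "fz \<noteq> 0" "b = a * fx * fy / fz"
  shows "a = b * inverse fx * inverse fy / inverse fz"
  using assms by (simp add: field_simps)

lemma ar_trans:
  fixes a b c fx fy fz gx gy gz :: "'k::field"
  assumes "fx \<noteq> 0" "fy \<noteq> 0" "fz \<noteq> 0" "gx \<noteq> 0" "gy \<noteq> 0" "gz \<noteq> 0"
    "b = a * fx * fy / fz" "c = b * gx * gy / gz"
  shows "c = a * (fx * gx) * (fy * gy) / (fz * gz)"
  using assms(1-6) unfolding assms(8) assms(7) by (simp add: field_simps)

lemma ar_mult:
  fixes a b c d fx fy fz gx gy gz :: "'k::field"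
  assumes "fz \<noteq> 0" "gz \<noteq> 0"
    "b = a * fx * fy / fz" "d = c * gx * gy / gz"
  shows "b * d = a * c * (fx * gx) * (fy * gy) / (fz * gz)"
  using assms by (simp add: field_simps)

lemma coh_refl: "a \<in> cocycles2 G \<Longrightarrow> (a, a) \<in> cohomologous G"
  by (rule cohI[where f="\<lambda>_. 1"]) auto

lemma coh_agree:
  assumes G: "group G" and a: "a \<in> cocycles2 G"
    and agree: "\<And>x y. x \<in> carrier G \<Longrightarrow> y \<in> carrier G \<Longrightarrow> b x y = a x y"
  shows "(a, b) \<in> cohomologous G"
proof -
  have mc: "\<And>x y. x \<in> carrier G \<Longrightarrow> y \<in> carrier G \<Longrightarrow> x \<otimes>\<^bsub>G\<^esub> y \<in> carrier G"
    using G by (simp add: group.is_monoid monoid.m_closed)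
  have "b \<in> cocycles2 G" using a agree mc
    unfolding cocycles2_def by auto
  thus ?thesis by (rule cohI[OF a _, where f="\<lambda>_. 1"]) (auto simp: agree)
qed

lemma coh_sym:
  assumes G: "group G" and ab: "(a, b) \<in> cohomologous G"
  shows "(b, a) \<in> cohomologous G"
proof -
  obtain f where a: "a \<in> cocycles2 G" and b: "b \<in> cocycles2 G" and f: "\<forall>x\<in>carrier G. f x \<noteq> 0"
    "\<forall>x\<in>carrier G. \<forall>y\<in>carrier G. b x y = a x y * f x * f y / f (x \<otimes>\<^bsub>G\<^esub> y)"
    using ab by (rule cohE)
  have "\<forall>x\<in>carrier G. \<forall>y\<in>carrier G. a x y = b x y * inverse (f x) * inverse (f y) / inverse (f (x \<otimes>\<^bsub>G\<^esub> y))"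
  proof (intro ballI)
    fix x y assume xy: "x \<in> carrier G" "y \<in> carrier G"
    hence "x \<otimes>\<^bsub>G\<^esub> y \<in> carrier G" using G by (simp add: group.is_monoid monoid.m_closed)
    with xy f show "a x y = b x y * inverse (f x) * inverse (f y) / inverse (f (x \<otimes>\<^bsub>G\<^esub> y))"
      by (intro ar_sym) auto
  qed
  moreover have "\<forall>x\<in>carrier G. inverse (f x) \<noteq> 0" using f(1) by simp
  ultimately show ?thesis by (intro cohI[OF b a, where f="\<lambda>x. inverse (f x)"]) auto
qed

lemma coh_trans:
  assumes G: "group G" and ab: "(a, b) \<in> cohomologous G" and bc: "(b, c) \<in> cohomologous G"
  shows "(a, c) \<in> cohomologous G"
proof -
  obtain f where a: "a \<in> cocycles2 G" and f: "\<forall>x\<in>carrier G. f x \<noteq> 0"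
    "\<forall>x\<in>carrier G. \<forall>y\<in>carrier G. b x y = a x y * f x * f y / f (x \<otimes>\<^bsub>G\<^esub> y)"
    using ab by (rule cohE)
  obtain g where c: "c \<in> cocycles2 G" and g: "\<forall>x\<in>carrier G. g x \<noteq> 0"
    "\<forall>x\<in>carrier G. \<forall>y\<in>carrier G. c x y = b x y * g x * g y / g (x \<otimes>\<^bsub>G\<^esub> y)"
    using bc by (rule cohE)
  have "\<forall>x\<in>carrier G. \<forall>y\<in>carrier G. c x y = a x y * (f x * g x) * (f y * g y) / (f (x \<otimes>\<^bsub>G\<^esub> y) * g (x \<otimes>\<^bsub>G\<^esub> y))"
  proof (intro ballI)
    fix x y assume xy: "x \<in> carrier G" "y \<in> carrier G"
    hence "x \<otimes>\<^bsub>G\<^esub> y \<in> carrier G" using G by (simp add: group.is_monoid monoid.m_closed)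
    with xy f g show "c x y = a x y * (f x * g x) * (f y * g y) / (f (x \<otimes>\<^bsub>G\<^esub> y) * g (x \<otimes>\<^bsub>G\<^esub> y))"
      by (intro ar_trans[where b="b x y"]) auto
  qed
  moreover have "\<forall>x\<in>carrier G. f x * g x \<noteq> 0" using f(1) g(1) by simp
  ultimately show ?thesis by (intro cohI[OF a c, where f="\<lambda>x. f x * g x"]) auto
qed

lemma coh_mult:
  assumes G: "group G" and ab: "(a, b) \<in> cohomologous G" and cd: "(c, d) \<in> cohomologous G"
  shows "((\<lambda>x y. a x y * c x y), (\<lambda>x y. b x y * d x y)) \<in> cohomologous G"
proof -
  obtain f where a: "a \<in> cocycles2 G" and b: "b \<in> cocycles2 G" and f: "\<forall>x\<in>carrier G. f x \<noteq> 0"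
    "\<forall>x\<in>carrier G. \<forall>y\<in>carrier G. b x y = a x y * f x * f y / f (x \<otimes>\<^bsub>G\<^esub> y)"
    using ab by (rule cohE)
  obtain g where c: "c \<in> cocycles2 G" and d: "d \<in> cocycles2 G" and g: "\<forall>x\<in>carrier G. g x \<noteq> 0"
    "\<forall>x\<in>carrier G. \<forall>y\<in>carrier G. d x y = c x y * g x * g y / g (x \<otimes>\<^bsub>G\<^esub> y)"
    using cd by (rule cohE)
  have "\<forall>x\<in>carrier G. \<forall>y\<in>carrier G. b x y * d x y = a x y * c x y * (f x * g x) * (f y * g y) / (f (x \<otimes>\<^bsub>G\<^esub> y) * g (x \<otimes>\<^bsub>G\<^esub> y))"
  proof (intro ballI)
    fix x y assume xy: "x \<in> carrier G" "y \<in> carrier G"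
    hence "x \<otimes>\<^bsub>G\<^esub> y \<in> carrier G" using G by (simp add: group.is_monoid monoid.m_closed)
    with xy f g show "b x y * d x y = a x y * c x y * (f x * g x) * (f y * g y) / (f (x \<otimes>\<^bsub>G\<^esub> y) * g (x \<otimes>\<^bsub>G\<^esub> y))"
      by (intro ar_mult) auto
  qed
  moreover have "\<forall>x\<in>carrier G. f x * g x \<noteq> 0" using f(1) g(1) by simp
  moreover have m1: "(\<lambda>x y. a x y * c x y) \<in> cocycles2 G" by (rule cocycles2_mult[OF a c])
  moreover have m2: "(\<lambda>x y. b x y * d x y) \<in> cocycles2 G" by (rule cocycles2_mult[OF b d])
  ultimately show ?thesis by (intro cohI[where f="\<lambda>x. f x * g x"]) auto
qed

lemma coh_equiv: assumes G: "group G" shows "equiv (cocycles2 G) (cohomologous G)"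
proof (rule equivI)
  show "cohomologous G \<subseteq> cocycles2 G \<times> cocycles2 G" by (auto simp: cohomologous_def)
  show "refl_on (cocycles2 G) (cohomologous G)"
    unfolding refl_on_def using coh_refl \<open>cohomologous G \<subseteq> cocycles2 G \<times> cocycles2 G\<close> by blast
  show "sym (cohomologous G)" unfolding sym_def using coh_sym[OF G] by blast
  show "trans (cohomologous G)" unfolding trans_def using coh_trans[OF G] by blast
qed

definition rep :: "'a set \<Rightarrow> 'a" where "rep A = (SOME c. c \<in> A)"

lemma class_rep:
  assumes G: "group G" and a: "a \<in> cocycles2 G"
  shows "(a, rep (cohomologous G `` {a})) \<in> cohomologous G"
proof -
  have "a \<in> cohomologous G `` {a}" using coh_refl[OF a] by simp
  hence "rep (cohomologous G `` {a}) \<in> cohomologous G `` {a}" unfolding rep_def by (rule someI[where P="\<lambda>c. c \<in> cohomologous G `` {a}"])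
  thus ?thesis by simp
qed

lemma H2_mult_class:
  assumes G: "group G" and a: "a \<in> cocycles2 G" and b: "b \<in> cocycles2 G"
  shows "H2_mult G (cohomologous G `` {a}) (cohomologous G `` {b})
     = cohomologous G `` {(\<lambda>x y. a x y * b x y)}"
proof -
  have "((\<lambda>x y. a x y * b x y), (\<lambda>x y. rep (cohomologous G `` {a}) x y * rep (cohomologous G `` {b}) x y)) \<in> cohomologous G"
    by (rule coh_mult[OF G class_rep[OF G a] class_rep[OF G b]])
  hence "cohomologous G `` {(\<lambda>x y. rep (cohomologous G `` {a}) x y * rep (cohomologous G `` {b}) x y)}
     = cohomologous G `` {(\<lambda>x y. a x y * b x y)}"
    by (rule equiv_class_eq[OF coh_equiv[OF G] coh_sym[OF G]])
  thus ?thesis unfolding H2_mult_def rep_def .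
qed

lemma H2_class:
  assumes "\<psi> \<in> H2 G"
  obtains a where "a \<in> cocycles2 G" "\<psi> = cohomologous G `` {a}"
  using assms unfolding H2_def by (auto elim!: quotientE)

lemma H2_mult_closed:
  assumes G: "group G" and "\<psi> \<in> H2 G" "\<psi>' \<in> H2 G"
  shows "H2_mult G \<psi> \<psi>' \<in> H2 G"
proof -
  obtain a where a: "a \<in> cocycles2 G" "\<psi> = cohomologous G `` {a}"
    using H2_class[OF assms(2)] by blast
  obtain b where b: "b \<in> cocycles2 G" "\<psi>' = cohomologous G `` {b}"
    using H2_class[OF assms(3)] by blast
  show ?thesis unfolding a b H2_mult_class[OF G a(1) b(1)] H2_def
    by (rule quotientI) (rule cocycles2_mult[OF a(1) b(1)])
qed

lemma H2_one_in: "H2_one G \<in> H2 G"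
  unfolding H2_one_def H2_def by (rule quotientI) (rule cocycles2_one)

lemma H2_assoc:
  assumes G: "group G" and "\<psi> \<in> H2 G" "\<psi>' \<in> H2 G" "\<psi>'' \<in> H2 G"
  shows "H2_mult G (H2_mult G \<psi> \<psi>') \<psi>'' = H2_mult G \<psi> (H2_mult G \<psi>' \<psi>'')"
proof -
  obtain a where a: "a \<in> cocycles2 G" "\<psi> = cohomologous G `` {a}"
    using H2_class[OF assms(2)] by blast
  obtain b where b: "b \<in> cocycles2 G" "\<psi>' = cohomologous G `` {b}"
    using H2_class[OF assms(3)] by blast
  obtain c where c: "c \<in> cocycles2 G" "\<psi>'' = cohomologous G `` {c}"
    using H2_class[OF assms(4)] by blast
  have ab: "(\<lambda>x y. a x y * b x y) \<in> cocycles2 G" and bc: "(\<lambda>x y. b x y * c x y) \<in> cocycles2 G"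
    using a b c cocycles2_mult by blast+
  have e: "(\<lambda>x y. a x y * b x y * c x y) = (\<lambda>x y. a x y * (b x y * c x y))" by (simp add: mult.assoc)
  show ?thesis unfolding a b c H2_mult_class[OF G a(1) b(1)] H2_mult_class[OF G b(1) c(1)]
      H2_mult_class[OF G ab c(1)] H2_mult_class[OF G a(1) bc] e ..
qed

lemma H2_lone:
  assumes G: "group G" and "\<psi> \<in> H2 G"
  shows "H2_mult G (H2_one G) \<psi> = \<psi>"
proof -
  obtain a where a: "a \<in> cocycles2 G" "\<psi> = cohomologous G `` {a}"
    using H2_class[OF assms(2)] by blast
  show ?thesis unfolding a H2_one_def
    using H2_mult_class[OF G cocycles2_one a(1)] by simp
qed

lemma H2_inv:
  assumes G: "group G" and "\<psi> \<in> H2 G"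
  shows "\<exists>\<phi>\<in>H2 G. H2_mult G \<phi> \<psi> = H2_one G"
proof -
  obtain a where a: "a \<in> cocycles2 G" "\<psi> = cohomologous G `` {a}"
    using H2_class[OF assms(2)] by blast
  let ?b = "\<lambda>x y. inverse (a x y)"
  have b: "?b \<in> cocycles2 G" by (rule cocycles2_inv[OF a(1)])
  have "((\<lambda>x y. 1), (\<lambda>x y. ?b x y * a x y)) \<in> cohomologous G"
  proof (rule coh_agree[OF G cocycles2_one])
    fix x y assume "x \<in> carrier G" "y \<in> carrier G"
    hence "a x y \<noteq> 0" using a(1) unfolding cocycles2_def by blast
    thus "inverse (a x y) * a x y = 1" by simp
  qed
  hence eq: "cohomologous G `` {(\<lambda>x y. ?b x y * a x y)} = H2_one G"
    unfolding H2_one_def by (rule equiv_class_eq[OF coh_equiv[OF G] coh_sym[OF G]])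
  have H2b: "cohomologous G `` {?b} \<in> H2 G" unfolding H2_def by (rule quotientI[OF b])
  show ?thesis unfolding a
    by (rule bexI[OF _ H2b]) (simp only: H2_mult_class[OF G b a(1)] eq)
qed



lemma cdD:
  assumes "compatible_datum G u scale act (T, \<beta>, \<alpha>, \<psi>)"
  shows "\<alpha> \<in> iso G G" "\<alpha> \<in> extensional (carrier G)" "\<alpha> u = u"
    "Vector_Spaces.linear scale scale T" "bij T"
    "\<forall>g\<in>carrier G. \<forall>v. T (act g v) = act (\<alpha> g) (T v)"
    "\<forall>v w. \<beta> v w = \<beta> w v"
    "\<forall>v. Vector_Spaces.linear scale (*) (\<beta> v)" "\<forall>w. Vector_Spaces.linear scale (*) (\<lambda>v. \<beta> v w)"
    "\<forall>g\<in>carrier G. \<forall>v w. \<beta> (act g v) (act g w) = \<beta> v w"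
    "\<psi> \<in> H2 G"
  using assms unfolding compatible_datum_def prod.case by blast+

lemma cdI:
  assumes "\<alpha> \<in> iso G G" "\<alpha> \<in> extensional (carrier G)" "\<alpha> u = u"
    "Vector_Spaces.linear scale scale T" "bij T"
    "\<forall>g\<in>carrier G. \<forall>v. T (act g v) = act (\<alpha> g) (T v)"
    "\<forall>v w. \<beta> v w = \<beta> w v"
    "\<forall>v. Vector_Spaces.linear scale (*) (\<beta> v)" "\<forall>w. Vector_Spaces.linear scale (*) (\<lambda>v. \<beta> v w)"
    "\<forall>g\<in>carrier G. \<forall>v w. \<beta> (act g v) (act g w) = \<beta> v w"
    "\<psi> \<in> H2 G"
  shows "compatible_datum G u scale act (T, \<beta>, \<alpha>, \<psi>)"
  using assms unfolding compatible_datum_def prod.case by blast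

lemma datum_mult_simp: "datum_mult G (T, \<beta>, \<alpha>, \<psi>) (T', \<beta>', \<alpha>', \<psi>') =
  (T \<circ> T', (\<lambda>v w. \<beta> (T' v) (T' w) + \<beta>' v w), compose (carrier G) \<alpha> \<alpha>', H2_mult G \<psi> \<psi>')"
  unfolding datum_mult_def by simp

lemma lin_add_k:
  assumes "Vector_Spaces.linear s (*) f" "Vector_Spaces.linear s (*) g"
  shows "Vector_Spaces.linear s ((*) :: 'k::field \<Rightarrow> _) (\<lambda>x. f x + g x)"
  using assms unfolding Vector_Spaces.linear_iff by (simp add: distrib_left)

lemma lin_neg_k:
  assumes "Vector_Spaces.linear s (*) f"
  shows "Vector_Spaces.linear s ((*) :: 'k::field \<Rightarrow> _) (\<lambda>x. - f x)"
  using assms unfolding Vector_Spaces.linear_iff by simp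

lemma lin_inv:
  assumes "Vector_Spaces.linear s s T" "bij T"
  shows "Vector_Spaces.linear s s (inv_into UNIV T)"
proof -
  have inj: "inj T" and sur: "surj T" using assms(2) bij_is_inj bij_is_surj by auto
  have add: "\<And>x y. T (x + y) = T x + T y" and sc: "\<And>c x. T (s c x) = s c (T x)"
    using assms(1) unfolding Vector_Spaces.linear_iff by auto
  have "\<And>x y. inv_into UNIV T (x + y) = inv_into UNIV T x + inv_into UNIV T y"
  proof -
    fix x y
    have "T (inv_into UNIV T x + inv_into UNIV T y) = x + y" using add surj_f_inv_f[OF sur] by simp
    hence "inv_into UNIV T (x + y) = inv_into UNIV T (T (inv_into UNIV T x + inv_into UNIV T y))" by simp
    also have "\<dots> = inv_into UNIV T x + inv_into UNIV T y" by (rule inv_f_f[OF inj])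
    finally show "inv_into UNIV T (x + y) = inv_into UNIV T x + inv_into UNIV T y" .
  qed
  moreover have "\<And>c x. inv_into UNIV T (s c x) = s c (inv_into UNIV T x)"
  proof -
    fix c x
    have "T (s c (inv_into UNIV T x)) = s c x" using sc surj_f_inv_f[OF sur] by simp
    hence "inv_into UNIV T (s c x) = inv_into UNIV T (T (s c (inv_into UNIV T x)))" by simp
    also have "\<dots> = s c (inv_into UNIV T x)" by (rule inv_f_f[OF inj])
    finally show "inv_into UNIV T (s c x) = s c (inv_into UNIV T x)" .
  qed
  ultimately show ?thesis using assms(1) unfolding Vector_Spaces.linear_iff by blast
qed

lemma iso_closed: "\<alpha> \<in> iso G G \<Longrightarrow> x \<in> carrier G \<Longrightarrow> \<alpha> x \<in> carrier G"
  by (rule hom_in_carrier[OF iso_imp_homomorphism])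

lemma cd_mult:
  assumes G: "group G" and u: "u \<in> carrier G"
    and d: "compatible_datum G u scale act (T, \<beta>, \<alpha>, \<psi>)"
    and d': "compatible_datum G u scale act (T', \<beta>', \<alpha>', \<psi>')"
  shows "compatible_datum G u scale act (datum_mult G (T, \<beta>, \<alpha>, \<psi>) (T', \<beta>', \<alpha>', \<psi>'))"
  unfolding datum_mult_simp
proof (rule cdI)
  note D = cdD[OF d] and D' = cdD[OF d']
  have "\<alpha> \<circ> \<alpha>' \<in> iso G G" by (rule iso_set_trans[OF D'(1) D(1)])
  thus "compose (carrier G) \<alpha> \<alpha>' \<in> iso G G"
    by (rule group.iso_eq[OF G]) (simp add: compose_eq)
  have cl: "\<And>g. g \<in> carrier G \<Longrightarrow> \<alpha>' g \<in> carrier G" by (rule iso_closed[OF D'(1)])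
  show "compose (carrier G) \<alpha> \<alpha>' \<in> extensional (carrier G)" by simp
  show "compose (carrier G) \<alpha> \<alpha>' u = u" using u D(3) D'(3) by (simp add: compose_eq)
  show "Vector_Spaces.linear scale scale (T \<circ> T')"
    using Vector_Spaces.linear_compose D(4) D'(4) by blast
  show "bij (T \<circ> T')" using D(5) D'(5) by (rule bij_comp[rotated])
  show "\<forall>g\<in>carrier G. \<forall>v. (T \<circ> T') (act g v) = act (compose (carrier G) \<alpha> \<alpha>' g) ((T \<circ> T') v)"
  proof (intro ballI allI)
    fix g v assume g: "g \<in> carrier G"
    have "(T \<circ> T') (act g v) = T (act (\<alpha>' g) (T' v))" using D'(6) g by simp
    also have "\<dots> = act (\<alpha> (\<alpha>' g)) (T (T' v))" using D(6) cl[OF g] by blast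
    finally show "(T \<circ> T') (act g v) = act (compose (carrier G) \<alpha> \<alpha>' g) ((T \<circ> T') v)"
      using g by (simp add: compose_eq)
  qed
  show "\<forall>v w. \<beta> (T' v) (T' w) + \<beta>' v w = \<beta> (T' w) (T' v) + \<beta>' w v"
    using D(7) D'(7) by metis
  show "\<forall>v. Vector_Spaces.linear scale (*) (\<lambda>w. \<beta> (T' v) (T' w) + \<beta>' v w)"
  proof
    fix v
    have "Vector_Spaces.linear scale (*) (\<beta> (T' v) \<circ> T')"
      using Vector_Spaces.linear_compose D(8) D'(4) by blast
    hence "Vector_Spaces.linear scale (*) (\<lambda>w. \<beta> (T' v) (T' w))" by (simp add: comp_def)
    thus "Vector_Spaces.linear scale (*) (\<lambda>w. \<beta> (T' v) (T' w) + \<beta>' v w)"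
      using lin_add_k D'(8) by blast
  qed
  show "\<forall>w. Vector_Spaces.linear scale (*) (\<lambda>v. \<beta> (T' v) (T' w) + \<beta>' v w)"
  proof
    fix w
    have "Vector_Spaces.linear scale (*) ((\<lambda>v. \<beta> v (T' w)) \<circ> T')"
      using Vector_Spaces.linear_compose D(9) D'(4) by blast
    hence "Vector_Spaces.linear scale (*) (\<lambda>v. \<beta> (T' v) (T' w))" by (simp add: comp_def)
    thus "Vector_Spaces.linear scale (*) (\<lambda>v. \<beta> (T' v) (T' w) + \<beta>' v w)"
      using lin_add_k D'(9) by blast
  qed
  show "\<forall>g\<in>carrier G. \<forall>v w. \<beta> (T' (act g v)) (T' (act g w)) + \<beta>' (act g v) (act g w)
      = \<beta> (T' v) (T' w) + \<beta>' v w"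
  proof (intro ballI allI)
    fix g v w assume g: "g \<in> carrier G"
    have "\<beta> (T' (act g v)) (T' (act g w)) = \<beta> (act (\<alpha>' g) (T' v)) (act (\<alpha>' g) (T' w))"
      using D'(6) g by simp
    also have "\<dots> = \<beta> (T' v) (T' w)" using D(10) cl[OF g] by blast
    finally show "\<beta> (T' (act g v)) (T' (act g w)) + \<beta>' (act g v) (act g w)
      = \<beta> (T' v) (T' w) + \<beta>' v w" using D'(10) g by simp
  qed
  show "H2_mult G \<psi> \<psi>' \<in> H2 G" using H2_mult_closed[OF G D(11) D'(11)] .
qed


lemma iso_inj: "\<alpha> \<in> iso G G \<Longrightarrow> inj_on \<alpha> (carrier G)"
  by (simp add: iso_iff)

lemma iso_img: "\<alpha> \<in> iso G G \<Longrightarrow> \<alpha> ` carrier G = carrier G"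
  by (simp add: iso_iff)

lemma compose_assoc_ext:
  assumes "\<alpha>'' \<in> iso G G" "\<alpha>' \<in> iso G G"
  shows "compose (carrier G) (compose (carrier G) \<alpha> \<alpha>') \<alpha>'' = compose (carrier G) \<alpha> (compose (carrier G) \<alpha>' \<alpha>'')"
proof
  fix x show "compose (carrier G) (compose (carrier G) \<alpha> \<alpha>') \<alpha>'' x = compose (carrier G) \<alpha> (compose (carrier G) \<alpha>' \<alpha>'') x"
  proof (cases "x \<in> carrier G")
    case True
    have "\<alpha>'' x \<in> carrier G" by (rule iso_closed[OF assms(1) True])
    thus ?thesis using True by (simp add: compose_eq)
  next
    case False thus ?thesis by (simp add: compose_def)
  qed
qed

lemma compose_left_id:
  assumes "\<alpha> \<in> iso G G" "\<alpha> \<in> extensional (carrier G)"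
  shows "compose (carrier G) (restrict id (carrier G)) \<alpha> = \<alpha>"
proof
  fix x show "compose (carrier G) (restrict id (carrier G)) \<alpha> x = \<alpha> x"
  proof (cases "x \<in> carrier G")
    case True
    have "\<alpha> x \<in> carrier G" by (rule iso_closed[OF assms(1) True])
    thus ?thesis using True by (simp add: compose_eq)
  next
    case False
    have "\<alpha> x = undefined" by (rule extensional_arb[OF assms(2) False])
    thus ?thesis using False by (simp add: compose_def)
  qed
qed

lemma compose_left_inv:
  assumes "\<alpha> \<in> iso G G"
  shows "compose (carrier G) (restrict (inv_into (carrier G) \<alpha>) (carrier G)) \<alpha> = restrict id (carrier G)"
proof
  have inj: "inj_on \<alpha> (carrier G)" by (rule iso_inj[OF assms])
  fix x show "compose (carrier G) (restrict (inv_into (carrier G) \<alpha>) (carrier G)) \<alpha> x = restrict id (carrier G) x"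
  proof (cases "x \<in> carrier G")
    case True
    have "\<alpha> x \<in> carrier G" by (rule iso_closed[OF assms(1) True])
    thus ?thesis using True inv_into_f_f[OF inj True] by (simp add: compose_eq)
  next
    case False thus ?thesis by (simp add: compose_def)
  qed
qed


lemma cd_one:
  fixes scale :: "'k::field \<Rightarrow> 'v \<Rightarrow> 'v::ab_group_add"
  assumes G: "group G" and u: "u \<in> carrier G"
    and d: "compatible_datum G u scale act (T, \<beta>, \<alpha>, \<psi>)"
  shows "compatible_datum G u scale act (datum_one G)"
  unfolding datum_one_def
proof (rule cdI)
  note D = cdD[OF d]
  have vs: "vector_space scale" using D(4) unfolding Vector_Spaces.linear_iff by blast
  have vk: "vector_space ((*) :: 'k \<Rightarrow> 'k \<Rightarrow> 'k)"
    using spec[OF D(8)] unfolding Vector_Spaces.linear_iff by blast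
  show "restrict id (carrier G) \<in> iso G G"
    by (rule group.iso_eq[OF G id_iso]) simp
  show "restrict id (carrier G) \<in> extensional (carrier G)" by (rule restrict_extensional)
  show "restrict id (carrier G) u = u" using u by simp
  show "Vector_Spaces.linear scale scale id" using vs unfolding Vector_Spaces.linear_iff by simp
  show "bij id" by (rule bij_id)
  show "\<forall>g\<in>carrier G. \<forall>v. id (act g v) = act (restrict id (carrier G) g) (id v)" by simp
  show "\<forall>v w. (0::'k) = 0" by simp
  show "\<forall>v. Vector_Spaces.linear scale (*) (\<lambda>w. (0::'k))"
    using vs vk unfolding Vector_Spaces.linear_iff by simp
  thus "\<forall>w. Vector_Spaces.linear scale (*) (\<lambda>v. (0::'k))" by simp
  show "\<forall>g\<in>carrier G. \<forall>v w. (0::'k) = 0" by simp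
  show "H2_one G \<in> H2 G" by (rule H2_one_in)
qed

lemma left_one:
  assumes G: "group G"
    and d: "compatible_datum G u scale act (T, \<beta>, \<alpha>, \<psi>)"
  shows "datum_mult G (datum_one G) (T, \<beta>, \<alpha>, \<psi>) = (T, \<beta>, \<alpha>, \<psi>)"
proof -
  note D = cdD[OF d]
  show ?thesis unfolding datum_one_def datum_mult_simp
    using compose_left_id[OF D(1) D(2)] H2_lone[OF G D(11)] by simp
qed

lemma left_inv:
  assumes G: "group G" and u: "u \<in> carrier G"
    and d: "compatible_datum G u scale act (T, \<beta>, \<alpha>, \<psi>)"
  shows "\<exists>y. compatible_datum G u scale act y \<and> datum_mult G y (T, \<beta>, \<alpha>, \<psi>) = datum_one G"
proof -
  note D = cdD[OF d]
  obtain \<phi> where \<phi>: "\<phi> \<in> H2 G" "H2_mult G \<phi> \<psi> = H2_one G" using H2_inv[OF G D(11)] by blast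
  let ?Ti = "inv_into UNIV T"
  let ?ai = "restrict (inv_into (carrier G) \<alpha>) (carrier G)"
  let ?bi = "\<lambda>v w. - \<beta> (?Ti v) (?Ti w)"
  have inj: "inj T" using D(5) by (rule bij_is_inj)
  have sur: "surj T" using D(5) by (rule bij_is_surj)
  have injA: "inj_on \<alpha> (carrier G)" by (rule iso_inj[OF D(1)])
  have imgA: "\<alpha> ` carrier G = carrier G" by (rule iso_img[OF D(1)])
  have cdi: "compatible_datum G u scale act (?Ti, ?bi, ?ai, \<phi>)"
  proof (rule cdI)
    have "inv_into (carrier G) \<alpha> \<in> iso G G" by (rule group.iso_set_sym[OF G D(1)])
    thus "?ai \<in> iso G G" by (rule group.iso_eq[OF G]) simp
    show "?ai \<in> extensional (carrier G)" by (rule restrict_extensional)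
    have "inv_into (carrier G) \<alpha> (\<alpha> u) = u" by (rule inv_into_f_f[OF injA u])
    thus "?ai u = u" using u D(3) by simp
    show "Vector_Spaces.linear scale scale ?Ti" by (rule lin_inv[OF D(4) D(5)])
    show "bij ?Ti" by (rule bij_imp_bij_inv[OF D(5)])
    show "\<forall>g\<in>carrier G. \<forall>v. ?Ti (act g v) = act (?ai g) (?Ti v)"
    proof (intro ballI allI)
      fix g v assume g: "g \<in> carrier G"
      let ?h = "inv_into (carrier G) \<alpha> g"
      have gi: "g \<in> \<alpha> ` carrier G" using g imgA by simp
      have h: "?h \<in> carrier G" by (rule inv_into_into[OF gi])
      have ah: "\<alpha> ?h = g" by (rule f_inv_into_f[OF gi])
      have "T (act ?h (?Ti v)) = act (\<alpha> ?h) (T (?Ti v))" using D(6) h by blast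
      also have "\<dots> = act g v" using ah surj_f_inv_f[OF sur] by simp
      finally have "?Ti (T (act ?h (?Ti v))) = ?Ti (act g v)" by simp
      hence "act ?h (?Ti v) = ?Ti (act g v)" using inv_f_f[OF inj] by simp
      thus "?Ti (act g v) = act (?ai g) (?Ti v)" using g by simp
    qed
    show "\<forall>v w. ?bi v w = ?bi w v" using D(7) by simp
    show "\<forall>v. Vector_Spaces.linear scale (*) (\<lambda>w. ?bi v w)"
    proof
      fix v
      have "Vector_Spaces.linear scale (*) (\<beta> (?Ti v) \<circ> ?Ti)"
        using Vector_Spaces.linear_compose lin_inv[OF D(4) D(5)] spec[OF D(8)] by blast
      hence "Vector_Spaces.linear scale (*) (\<lambda>w. - (\<beta> (?Ti v) \<circ> ?Ti) w)" by (rule lin_neg_k)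
      thus "Vector_Spaces.linear scale (*) (\<lambda>w. ?bi v w)" by (simp add: comp_def)
    qed
    show "\<forall>w. Vector_Spaces.linear scale (*) (\<lambda>v. ?bi v w)"
    proof
      fix w
      have "Vector_Spaces.linear scale (*) ((\<lambda>v. \<beta> v (?Ti w)) \<circ> ?Ti)"
        using Vector_Spaces.linear_compose lin_inv[OF D(4) D(5)] spec[OF D(9)] by blast
      hence "Vector_Spaces.linear scale (*) (\<lambda>v. - ((\<lambda>v. \<beta> v (?Ti w)) \<circ> ?Ti) v)" by (rule lin_neg_k)
      thus "Vector_Spaces.linear scale (*) (\<lambda>v. ?bi v w)" by (simp add: comp_def)
    qed
    show "\<forall>g\<in>carrier G. \<forall>v w. ?bi (act g v) (act g w) = ?bi v w"
    proof (intro ballI allI)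
      fix g v w assume g: "g \<in> carrier G"
      let ?h = "inv_into (carrier G) \<alpha> g"
      have gi: "g \<in> \<alpha> ` carrier G" using g imgA by simp
      have h: "?h \<in> carrier G" by (rule inv_into_into[OF gi])
      have ah: "\<alpha> ?h = g" by (rule f_inv_into_f[OF gi])
      have e: "\<And>x. ?Ti (act g x) = act ?h (?Ti x)"
      proof -
        fix x
        have "T (act ?h (?Ti x)) = act (\<alpha> ?h) (T (?Ti x))" using D(6) h by blast
        also have "\<dots> = act g x" using ah surj_f_inv_f[OF sur] by simp
        finally have "?Ti (T (act ?h (?Ti x))) = ?Ti (act g x)" by simp
        thus "?Ti (act g x) = act ?h (?Ti x)" using inv_f_f[OF inj] by simp
      qed
      have "\<beta> (act ?h (?Ti v)) (act ?h (?Ti w)) = \<beta> (?Ti v) (?Ti w)" using D(10) h by blast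
      thus "?bi (act g v) (act g w) = ?bi v w" using e by simp
    qed
    show "\<phi> \<in> H2 G" by (rule \<phi>(1))
  qed
  have "datum_mult G (?Ti, ?bi, ?ai, \<phi>) (T, \<beta>, \<alpha>, \<psi>) = datum_one G"
    unfolding datum_mult_simp datum_one_def
    using inv_o_cancel[OF inj] compose_left_inv[OF D(1)] \<phi>(2) inv_f_f[OF inj]
    by simp
  thus ?thesis using cdi by blast
qed


lemma datum_assoc:
  assumes x: "compatible_datum G u scale act (T, \<beta>, \<alpha>, \<psi>)"
    and y: "compatible_datum G u scale act (T', \<beta>', \<alpha>', \<psi>')"
    and z: "compatible_datum G u scale act (T'', \<beta>'', \<alpha>'', \<psi>'')"
    and G: "group G"
  shows "datum_mult G (datum_mult G (T, \<beta>, \<alpha>, \<psi>) (T', \<beta>', \<alpha>', \<psi>')) (T'', \<beta>'', \<alpha>'', \<psi>'')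
       = datum_mult G (T, \<beta>, \<alpha>, \<psi>) (datum_mult G (T', \<beta>', \<alpha>', \<psi>') (T'', \<beta>'', \<alpha>'', \<psi>''))"
proof -
  note X = cdD[OF x] and Y = cdD[OF y] and Z = cdD[OF z]
  have c: "compose (carrier G) (compose (carrier G) \<alpha> \<alpha>') \<alpha>'' = compose (carrier G) \<alpha> (compose (carrier G) \<alpha>' \<alpha>'')"
    by (rule compose_assoc_ext[OF Z(1) Y(1)])
  have h: "H2_mult G (H2_mult G \<psi> \<psi>') \<psi>'' = H2_mult G \<psi> (H2_mult G \<psi>' \<psi>'')"
    by (rule H2_assoc[OF G X(11) Y(11) Z(11)])
  have b: "(\<lambda>v w. \<beta> (T' (T'' v)) (T' (T'' w)) + \<beta>' (T'' v) (T'' w) + \<beta>'' v w)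
     = (\<lambda>v w. \<beta> (T' (T'' v)) (T' (T'' w)) + (\<beta>' (T'' v) (T'' w) + \<beta>'' v w))"
    by (simp add: add.assoc)
  show ?thesis unfolding datum_mult_simp using c h b by (simp add: comp_assoc)
qed

theorem lemma4p8:
  fixes G :: "('g, 'm) monoid_scheme" and u :: 'g
    and scale :: "'k::field_char_0 \<Rightarrow> 'v \<Rightarrow> 'v::ab_group_add"
    and act :: "'g \<Rightarrow> 'v \<Rightarrow> 'v"
    and d d' :: "('v, 'k, 'g) datum"
  assumes alg_closed: "\<forall>p :: 'k poly. degree p > 0 \<longrightarrow> (\<exists>x. poly p x = 0)"
    and G: "comm_group G" and finG: "finite (carrier G)"
    and u: "u \<in> carrier G" and ord_u: "group.ord G u = 2"
    and V: "\<exists>B. finite_dimensional_vector_space scale B"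
    and act_lin: "\<forall>g\<in>carrier G. Vector_Spaces.linear scale scale (act g)"
    and act_one: "act \<one>\<^bsub>G\<^esub> = id"
    and act_mult: "\<forall>g\<in>carrier G. \<forall>h\<in>carrier G. act (g \<otimes>\<^bsub>G\<^esub> h) = act g \<circ> act h"
    and act_u: "\<forall>v. act u v = - v"
    and d: "compatible_datum G u scale act d"
    and d': "compatible_datum G u scale act d'"
  shows "compatible_datum G u scale act (datum_mult G d d')
     \<and> group (compatible_data_monoid G u scale act)"
proof
  have Gg: "group G" using G by (rule comm_group.axioms(2))
  obtain T \<beta> \<alpha> \<psi> where dd: "d = (T, \<beta>, \<alpha>, \<psi>)" by (cases d)
  obtain T' \<beta>' \<alpha>' \<psi>' where dd': "d' = (T', \<beta>', \<alpha>', \<psi>')" by (cases d')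
  show "compatible_datum G u scale act (datum_mult G d d')"
    unfolding dd dd' by (rule cd_mult[OF Gg u d[unfolded dd] d'[unfolded dd']])
  let ?M = "compatible_data_monoid G u scale act"
  have carM: "carrier ?M = {d. compatible_datum G u scale act d}"
    and mulM: "\<And>x y. x \<otimes>\<^bsub>?M\<^esub> y = datum_mult G x y"
    and oneM: "\<one>\<^bsub>?M\<^esub> = datum_one G"
    by (simp_all add: compatible_data_monoid_def)
  show "group ?M"
  proof (rule groupI)
    fix x y assume "x \<in> carrier ?M" "y \<in> carrier ?M"
    hence x: "compatible_datum G u scale act x" and y: "compatible_datum G u scale act y"
      unfolding carM by simp_all
    obtain a1 a2 a3 a4 where xx: "x = (a1, a2, a3, a4)" by (cases x)
    obtain b1 b2 b3 b4 where yy: "y = (b1, b2, b3, b4)" by (cases y)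
    show "x \<otimes>\<^bsub>?M\<^esub> y \<in> carrier ?M" unfolding carM mulM
      using cd_mult[OF Gg u x[unfolded xx] y[unfolded yy]] xx yy by simp
  next
    show "\<one>\<^bsub>?M\<^esub> \<in> carrier ?M" unfolding carM oneM
      using cd_one[OF Gg u d[unfolded dd]] by simp
  next
    fix x y z assume "x \<in> carrier ?M" "y \<in> carrier ?M" "z \<in> carrier ?M"
    hence x: "compatible_datum G u scale act x" and y: "compatible_datum G u scale act y"
      and z: "compatible_datum G u scale act z"
      unfolding carM by simp_all
    obtain a1 a2 a3 a4 where xx: "x = (a1, a2, a3, a4)" by (cases x)
    obtain b1 b2 b3 b4 where yy: "y = (b1, b2, b3, b4)" by (cases y)
    obtain c1 c2 c3 c4 where zz: "z = (c1, c2, c3, c4)" by (cases z)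
    show "x \<otimes>\<^bsub>?M\<^esub> y \<otimes>\<^bsub>?M\<^esub> z = x \<otimes>\<^bsub>?M\<^esub> (y \<otimes>\<^bsub>?M\<^esub> z)"
      unfolding mulM xx yy zz
      by (rule datum_assoc[OF x[unfolded xx] y[unfolded yy] z[unfolded zz] Gg])
  next
    fix x assume "x \<in> carrier ?M"
    hence x: "compatible_datum G u scale act x" unfolding carM by simp
    obtain a1 a2 a3 a4 where xx: "x = (a1, a2, a3, a4)" by (cases x)
    show "\<one>\<^bsub>?M\<^esub> \<otimes>\<^bsub>?M\<^esub> x = x" unfolding mulM oneM xx
      by (rule left_one[OF Gg x[unfolded xx]])
  next
    fix x assume "x \<in> carrier ?M"
    hence x: "compatible_datum G u scale act x" unfolding carM by simp
    obtain a1 a2 a3 a4 where xx: "x = (a1, a2, a3, a4)" by (cases x)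
    obtain y where y: "compatible_datum G u scale act y" "datum_mult G y x = datum_one G"
      using left_inv[OF Gg u x[unfolded xx]] xx by blast
    show "\<exists>y\<in>carrier ?M. y \<otimes>\<^bsub>?M\<^esub> x = \<one>\<^bsub>?M\<^esub>"
      unfolding carM mulM oneM using y by blast
  qed
qed

end
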